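(* Let $(V,\mathcal H,\iota,W)$ be a generalized functional theory. For every $v\in V$, $$E(v)=\min_{\rho\in\bigcup_{u\in V}\iota^*(\mathbf G_p(u))}\big[\langle\rho,v\rangle+\mathcal F_{HK}(\rho)\big]=\min_{\rho\in\iota^*(\mathcal P)}\big[\langle\rho,v\rangle+\mathcal F_p(\rho)\big]=\min_{\rho\in\iota^*(\mathcal E)}\big[\langle\rho,v\rangle+\mathcal F_e(\rho)\big].$$
   Context: A generalized functional theory is a tuple $(V,\mathcal H,\iota,W)$ with $V$ a finite-dimensional real vector space, $\mathcal H$ a finite-dimensional complex Hilbert space, $\iota:V\to i\mathfrak u(\mathcal H)$ linear into the Hermitian operators, $W$ Hermitian. Density operators are regarded as elements of $(i\mathfrak u(\mathcal H))^*$ via $\Gamma\mapsto\mathrm{Tr}(\Gamma\,\cdot)$; $\iota^*$ is the dual map and $\langle\cdot,\cdot\rangle$ the natural pairings. $\mathcal P$ = pure states, $\mathcal E$ = density operators. $E(v)=\min_{\|\Psi\|=1}\langle\Psi|\iota(v)+W|\Psi\rangle$ is the ground state energy, $\mathbf G_p(v)$ the set of pure ground states of $\iota(v)+W$. The Hohenberg–Kohn functional $\mathcal F_{HK}$ is defined on the pure-state $v$-representable densities $\bigcup_{u}\iota^*(\mathbf G_p(u))$ by $\mathcal F_{HK}(\rho)=\mathrm{Tr}(\Gamma W)$ for any $u$ and any $\Gamma\in\mathbf G_p(u)$ with $\iota^*(\Gamma)=\rho$ (this is independent of the choices). The pure and ensemble functionals are $\mathcal F_p(\rho)=\min\{\mathrm{Tr}(\Gamma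 W):\Gamma\in\mathcal P,\iota^*(\Gamma)=\rho\}$ on $\iota^*(\mathcal P)$ and $\mathcal F_e(\rho)=\min\{\mathrm{Tr}(\Gamma W):\Gamma\in\mathcal E,\iota^*(\Gamma)=\rho\}$ on $\iota^*(\mathcal E)$. *)

theory Defs
  imports "HOL-Analysis.Analysis"
begin

text \<open>Hilbert space H = complex^'n (finite, nonzero dimension); operators = complex^'n^'n.\<close>

definition adj :: "complex^'n^'n \<Rightarrow> complex^'n^'n" where
  "adj A = (\<chi> i j. cnj (A $ j $ i))"

definition hermitian :: "complex^'n^'n \<Rightarrow> bool" where
  "hermitian A \<longleftrightarrow> adj A = A"

definition qform :: "complex^'n^'n \<Rightarrow> complex^'n \<Rightarrow> complex" where
  "qform A x = (\<Sum>i\<in>UNIV. \<Sum>j\<in>UNIV. cnj (x $ i) * A $ i $ j * x $ j)"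

definition proj :: "complex^'n \<Rightarrow> complex^'n^'n" where
  "proj x = (\<chi> i j. x $ i * cnj (x $ j))"

definition pure_states :: "(complex^'n^'n) set" where
  "pure_states = {proj \<Psi> | \<Psi>. norm \<Psi> = 1}"

definition density_ops :: "(complex^'n^'n) set" where
  "density_ops = {\<Gamma>. hermitian \<Gamma> \<and> (\<forall>x. 0 \<le> Re (qform \<Gamma> x)) \<and> trace \<Gamma> = 1}"

definition gft :: "('v::real_vector \<Rightarrow> complex^'n^'n) \<Rightarrow> complex^'n^'n \<Rightarrow> bool" where
  "gft \<iota> W \<longleftrightarrow> (\<exists>B::'v set. finite B \<and> span B = UNIV) \<and> linear \<iota> \<and>
     (\<forall>v. hermitian (\<iota> v)) \<and> hermitian W"

definition dualmap :: "('v \<Rightarrow> complex^'n^'n) \<Rightarrow> complex^'n^'n \<Rightarrow> ('v \<Rightarrow> real)" where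
  "dualmap \<iota> \<Gamma> = (\<lambda>v. Re (trace (\<Gamma> ** \<iota> v)))"

definition gs_energy :: "('v \<Rightarrow> complex^'n^'n) \<Rightarrow> complex^'n^'n \<Rightarrow> 'v \<Rightarrow> real" where
  "gs_energy \<iota> W v = Inf {Re (qform (\<iota> v + W) \<Psi>) | \<Psi>. norm \<Psi> = 1}"

definition pure_ground_states :: "('v \<Rightarrow> complex^'n^'n) \<Rightarrow> complex^'n^'n \<Rightarrow> 'v \<Rightarrow> (complex^'n^'n) set" where
  "pure_ground_states \<iota> W u =
     {proj \<Psi> | \<Psi>. norm \<Psi> = 1 \<and> Re (qform (\<iota> u + W) \<Psi>) = gs_energy \<iota> W u}"

definition vrep :: "('v \<Rightarrow> complex^'n^'n) \<Rightarrow> complex^'n^'n \<Rightarrow> ('v \<Rightarrow> real) set" where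
  "vrep \<iota> W = (\<Union>u. dualmap \<iota> ` pure_ground_states \<iota> W u)"

definition F_HK :: "('v \<Rightarrow> complex^'n^'n) \<Rightarrow> complex^'n^'n \<Rightarrow> ('v \<Rightarrow> real) \<Rightarrow> real" where
  "F_HK \<iota> W \<rho> = Re (trace ((SOME \<Gamma>. \<exists>u. \<Gamma> \<in> pure_ground_states \<iota> W u \<and> dualmap \<iota> \<Gamma> = \<rho>) ** W))"

definition F_p :: "('v \<Rightarrow> complex^'n^'n) \<Rightarrow> complex^'n^'n \<Rightarrow> ('v \<Rightarrow> real) \<Rightarrow> real" where
  "F_p \<iota> W \<rho> = Inf {Re (trace (\<Gamma> ** W)) | \<Gamma>. \<Gamma> \<in> pure_states \<and> dualmap \<iota> \<Gamma> = \<rho>}"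

definition F_e :: "('v \<Rightarrow> complex^'n^'n) \<Rightarrow> complex^'n^'n \<Rightarrow> ('v \<Rightarrow> real) \<Rightarrow> real" where
  "F_e \<iota> W \<rho> = Inf {Re (trace (\<Gamma> ** W)) | \<Gamma>. \<Gamma> \<in> density_ops \<and> dualmap \<iota> \<Gamma> = \<rho>}"

definition is_min_over :: "('a \<Rightarrow> real) \<Rightarrow> 'a set \<Rightarrow> real \<Rightarrow> bool" where
  "is_min_over f S m \<longleftrightarrow> (\<exists>x\<in>S. f x = m) \<and> (\<forall>x\<in>S. m \<le> f x)"

end

theory Submission
  imports Defs
begin



lemma trace_mm: "trace (A ** B) = (\<Sum>i\<in>UNIV. \<Sum>k\<in>UNIV. A$i$k * B$k$i)"
  by (simp add: trace_def matrix_matrix_mult_def)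

lemma trace_proj: "trace (proj x ** A) = qform A x"
  unfolding trace_mm qform_def proj_def
  apply simp
  apply (subst sum.swap)
  apply (simp add: mult.commute mult.left_commute)
  done

lemma trace_split: "Re (trace (G ** (A + B))) = Re (trace (G ** A)) + Re (trace (G ** B))"
  by (simp add: matrix_add_ldistrib trace_add)

lemma trace_splitl: "trace ((A + B) ** M) = trace (A ** M) + trace (B ** M)"
  unfolding trace_mm by (simp add: distrib_right sum.distrib)

lemma sum_if_const: "(\<Sum>j\<in>S. if P then f j else 0) = (if P then sum f S else 0)"
  by simp

lemma qform_shift:
  "qform A (\<chi> i. x$i + (if i = a then s else 0)) = qform A x + cnj s * (\<Sum>k\<in>UNIV. A$a$k * x$k)
     + (\<Sum>i\<in>UNIV. cnj (x$i) * A$i$a) * s + cnj s * A$a$a * s"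
proof -
  have e: "cnj (x$i + (if i = a then s else 0)) * A$i$j * (x$j + (if j = a then s else 0)) =
    cnj (x$i) * A$i$j * x$j + (if j = a then cnj (x$i) * A$i$a * s else 0)
    + (if i = a then cnj s * (A$a$j * x$j) else 0) + (if i = a then (if j = a then cnj s * A$a$a * s else 0) else 0)"
    for i j by (auto simp: algebra_simps)
  show ?thesis unfolding qform_def vec_lambda_beta e
    by (simp add: sum_if_const sum.distrib sum_distrib_left[symmetric] sum_distrib_right[symmetric] algebra_simps)
qed

lemma norm_sq_vec: "(norm (x::complex^'n))^2 = (\<Sum>i\<in>UNIV. (norm (x$i))^2)"
  unfolding norm_vec_def L2_set_def by (simp add: sum_nonneg)

lemma qform_scale: "qform A ((r::real) *\<^sub>R x) = of_real (r^2) * qform A x"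
proof -
  have c: "((r::real) *\<^sub>R x)$i = of_real r * x$i" for i by (subst vector_scaleR_component) (rule scaleR_conv_of_real)
  show ?thesis unfolding qform_def c by (simp add: vector_scaleR_component sum_distrib_left algebra_simps power2_eq_square scaleR_conv_of_real)
qed

lemma qform_mat: "qform (mat c) x = c * (\<Sum>i\<in>UNIV. cnj (x$i) * x$i)"
proof -
  have "(\<Sum>j\<in>UNIV. cnj (x$i) * (mat c)$i$j * x$j) = c * (cnj (x$i) * x$i)" for i
  proof -
    have "(\<Sum>j\<in>UNIV. cnj (x$i) * (mat c)$i$j * x$j) = (\<Sum>j\<in>UNIV. if j = i then c * (cnj (x$i) * x$i) else 0)"
      by (rule sum.cong) (auto simp: mat_def)
    then show ?thesis by simp
  qed
  then show ?thesis unfolding qform_def by (simp add: sum_distrib_left)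
qed

lemma qform_diff: "qform (A - B) x = qform A x - qform B x"
  unfolding qform_def by (simp add: algebra_simps sum_subtractf)

lemma cont_qform: "continuous_on S (\<lambda>x. Re (qform A x))"
  unfolding qform_def by (intro continuous_intros)



lemma qform_basis: fixes G :: "complex^'n^'n" shows "qform G (\<chi> k. if k = j then 1 else 0) = G$j$j"
proof -
  have "cnj ((\<chi> k. if k = j then 1 else 0)$i) * G$i$k * (\<chi> k. if k = j then 1 else 0)$k
      = (if i = j then (if k = j then G$j$j else 0) else 0)" for i k by simp
  then show ?thesis unfolding qform_def by (simp add: sum_if_const)
qed

lemma basis_sum1: "(\<Sum>i\<in>UNIV. cnj (((\<chi> k. if k = j then 1 else 0)::complex^'n)$i) * f i) = f j"
proof -
  have "cnj (((\<chi> k. if k = j then 1 else 0)::complex^'n)$i) * f i = (if i = j then f i else 0)" for i by simp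
  then show ?thesis by simp
qed

lemma basis_sum2: "(\<Sum>i\<in>UNIV. f i * (((\<chi> k. if k = j then 1 else 0)::complex^'n)$i)) = f j"
proof -
  have "f i * (((\<chi> k. if k = j then 1 else 0)::complex^'n)$i) = (if i = j then f i else 0)" for i by simp
  then show ?thesis by simp
qed

lemma herm_cnj: "hermitian G \<Longrightarrow> G$j$i = cnj (G$i$j)"
  unfolding hermitian_def adj_def by (metis vec_lambda_beta)

lemma qform_schur:
  "qform (\<chi> i j. G$i$j - G$i$a * G$a$j / g) x
     = qform G x - (\<Sum>i\<in>UNIV. cnj (x$i) * G$i$a) * (\<Sum>k\<in>UNIV. G$a$k * x$k) / g"
proof -
  have "qform (\<chi> i j. G$i$j - G$i$a * G$a$j / g) x
     = (\<Sum>i\<in>UNIV. \<Sum>j\<in>UNIV. cnj (x$i) * G$i$j * x$j - (cnj (x$i) * G$i$a) * (G$a$j * x$j) / g)"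
    unfolding qform_def by (simp add: algebra_simps)
  also have "\<dots> = qform G x - (\<Sum>i\<in>UNIV. \<Sum>j\<in>UNIV. (cnj (x$i) * G$i$a) * (G$a$j * x$j) / g)"
    unfolding qform_def by (simp add: sum_subtractf)
  also have "(\<Sum>i\<in>UNIV. \<Sum>j\<in>UNIV. (cnj (x$i) * G$i$a) * (G$a$j * x$j) / g)
      = (\<Sum>i\<in>UNIV. cnj (x$i) * G$i$a) * (\<Sum>k\<in>UNIV. G$a$k * x$k) / g"
    by (simp add: sum_distrib_left sum_distrib_right sum_divide_distrib) (rule sum.swap)
  finally show ?thesis .
qed

lemma psd_trace_aux:
  fixes M :: "complex^'n^'n"
  assumes M: "\<forall>x. 0 \<le> Re (qform M x)" and S: "finite S"
  shows "\<forall>G. hermitian G \<and> (\<forall>x. 0 \<le> Re (qform G x)) \<and> (\<forall>i j. i \<notin> S \<longrightarrow> G$i$j = 0)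
     \<and> (\<forall>i j. j \<notin> S \<longrightarrow> G$i$j = 0) \<longrightarrow> 0 \<le> Re (trace (G ** M))"
  using S
proof (induction S rule: finite_induct)
  case empty
  show ?case
  proof (intro allI impI)
    fix G :: "complex^'n^'n"
    assume "hermitian G \<and> (\<forall>x. 0 \<le> Re (qform G x)) \<and> (\<forall>i j. i \<notin> {} \<longrightarrow> G$i$j = 0)
     \<and> (\<forall>i j. j \<notin> {} \<longrightarrow> G$i$j = 0)"
    then have "G = 0" by (simp add: vec_eq_iff)
    then show "0 \<le> Re (trace (G ** M))" by (simp add: trace_def)
  qed
next
  case (insert a S)
  show ?case
  proof (intro allI impI)
    fix G :: "complex^'n^'n"
    assume A: "hermitian G \<and> (\<forall>x. 0 \<le> Re (qform G x)) \<and> (\<forall>i j. i \<notin> insert a S \<longrightarrow> G$i$j = 0)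
     \<and> (\<forall>i j. j \<notin> insert a S \<longrightarrow> G$i$j = 0)"
    then have herm: "hermitian G" and psd: "\<And>x. 0 \<le> Re (qform G x)"
      and s1: "\<And>i j. i \<notin> insert a S \<Longrightarrow> G$i$j = 0" and s2: "\<And>i j. j \<notin> insert a S \<Longrightarrow> G$i$j = 0"
      by auto
    have hc: "\<And>i j. G$j$i = cnj (G$i$j)" using herm_cnj[OF herm] by blast
    have hc': "cnj (G$i$j) = G$j$i" for i j using hc[of j i] by simp
    have "Im (G$a$a) = 0" using arg_cong[OF hc[of a a], of Im] by simp
    then have Gaa: "G$a$a = of_real (Re (G$a$a))" by (simp add: complex_eq_iff)
    define d where "d = Re (G$a$a)"
    have Gd: "G$a$a = of_real d" unfolding d_def by (rule Gaa)
    have d0: "0 \<le> d" using psd[of "\<chi> k. if k = a then 1 else 0"] by (simp add: qform_basis d_def)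
    show "0 \<le> Re (trace (G ** M))"
    proof (cases "G$a$a = 0")
      case True
      have row: "G$a$j = 0" for j
      proof (rule ccontr)
        assume w: "G$a$j \<noteq> 0"
        then have ja: "j \<noteq> a" using True by auto
        define w where "w = G$a$j"
        define r where "r = (Re (G$j$j) + 1) / (2 * (norm w)^2)"
        define z where "z = - of_real r * w"
        have wn: "(norm w)^2 > 0" using w w_def by simp
        have cz: "cnj z * w = - of_real (r * (norm w)^2)"
        proof -
          have n2: "cnj w * w = of_real ((norm w)^2)" unfolding complex_norm_square by (rule mult.commute)
          have "cnj z * w = - of_real r * (cnj w * w)" unfolding z_def by simp
          then show ?thesis unfolding n2 by simp
        qed
        have "qform G (\<chi> i. (\<chi> k. if k = j then 1 else 0)$i + (if i = a then z else 0))
           = G$j$j + cnj z * w + cnj w * z"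
          by (subst qform_shift) (simp only: basis_sum1 basis_sum2 qform_basis True w_def hc', simp)
        moreover have "Re (cnj w * z) = Re (cnj z * w)"
        proof -
          have "cnj w * z = cnj (cnj z * w)" by (simp add: mult.commute)
          then show ?thesis by simp
        qed
        ultimately have "Re (qform G (\<chi> i. (\<chi> k. if k = j then 1 else 0)$i + (if i = a then z else 0)))
             = Re (G$j$j) - 2 * (r * (norm w)^2)" using cz by simp
        also have "\<dots> = -1" unfolding r_def using wn by (simp add: field_simps)
        finally show False using psd by (metis neg_0_le_iff_le not_one_le_zero)
      qed
      have "0 \<le> Re (trace (G ** M))"
      proof -
        have col: "G$j$a = 0" for j using row[of j] hc[of a j] by simp
        have "\<forall>i j. i \<notin> S \<longrightarrow> G$i$j = 0" using s1 row by (metis insertE)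
        moreover have "\<forall>i j. j \<notin> S \<longrightarrow> G$i$j = 0" using s2 col by (metis insertE)
        ultimately show ?thesis using insert.IH herm psd by blast
      qed
      then show ?thesis .
    next
      case False
      have dpos: "0 < d" using False d0 Gd by (metis less_eq_real_def of_real_0)
      define c :: "complex^'n" where "c = (\<chi> i. G$i$a / of_real (sqrt d))"
      define G' :: "complex^'n^'n" where "G' = (\<chi> i j. G$i$j - G$i$a * G$a$j / G$a$a)"
      have dec: "G = proj c + G'"
      proof -
        have "G$i$a / of_real (sqrt d) * cnj (G$j$a / of_real (sqrt d)) = G$i$a * G$a$j / G$a$a" for i j
        proof -
          have sd: "sqrt d * sqrt d = d" using dpos by simp
          have sq: "of_real (sqrt d) * of_real (sqrt d) = (of_real d :: complex)"
            by (metis sd of_real_mult)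
          have "cnj (G$j$a / of_real (sqrt d)) = G$a$j / of_real (sqrt d)" by (simp add: hc')
          then have "G$i$a / of_real (sqrt d) * cnj (G$j$a / of_real (sqrt d))
             = (G$i$a * G$a$j) / (of_real (sqrt d) * of_real (sqrt d))"
            by (simp only: times_divide_times_eq)
          also have "\<dots> = G$i$a * G$a$j / G$a$a" unfolding sq Gd ..
          finally show ?thesis .
        qed
        then show ?thesis unfolding proj_def c_def G'_def by (simp add: vec_eq_iff)
      qed
      have tr: "trace (G ** M) = qform M c + trace (G' ** M)"
        by (subst dec) (simp add: trace_splitl trace_proj)
      have "0 \<le> Re (trace (G' ** M))"
      proof -
        have h': "hermitian G'"
          unfolding hermitian_def adj_def G'_def
          by (simp add: vec_eq_iff hc')
        have p': "0 \<le> Re (qform G' x)" for x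
        proof -
          define p where "p = (\<Sum>k\<in>UNIV. G$a$k * x$k)"
          have q: "(\<Sum>i\<in>UNIV. cnj (x$i) * G$i$a) = cnj p"
            unfolding p_def by (simp add: hc' mult.commute)
          define t where "t = p / G$a$a"
          have "qform G (\<chi> i. x$i + (if i = a then - t else 0)) = qform G' x"
            unfolding G'_def qform_schur
            apply (subst qform_shift)
            apply (simp only: q p_def[symmetric])
            using dpos unfolding t_def Gd by (simp add: field_simps)
          then show ?thesis using psd by metis
        qed
        have s1': "\<forall>i j. i \<notin> S \<longrightarrow> G'$i$j = 0"
        proof (intro allI impI)
          fix i j assume "i \<notin> S"
          show "G'$i$j = 0"
          proof (cases "i = a")
            case True then show ?thesis unfolding G'_def using False by simp
          next
            case ia: False
            then have "G$i$j = 0" "G$i$a = 0" using s1 \<open>i \<notin> S\<close> by auto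
            then show ?thesis unfolding G'_def by simp
          qed
        qed
        have s2': "\<forall>i j. j \<notin> S \<longrightarrow> G'$i$j = 0"
        proof (intro allI impI)
          fix i j assume "j \<notin> S"
          show "G'$i$j = 0"
          proof (cases "j = a")
            case True then show ?thesis unfolding G'_def using False by simp
          next
            case ja: False
            then have "G$i$j = 0" "G$a$j = 0" using s2 \<open>j \<notin> S\<close> by auto
            then show ?thesis unfolding G'_def by simp
          qed
        qed
        show ?thesis using insert.IH h' p' s1' s2' by blast
      qed
      moreover have "0 \<le> Re (qform M c)" using M by blast
      ultimately show ?thesis using tr by simp
    qed
  qed
qed



lemma gs_min:
  fixes A :: "complex^'n^'n"
  defines "E \<equiv> Inf {Re (qform A \<Psi>) | \<Psi>. norm \<Psi> = 1}"
  shows "\<exists>\<Psi>. norm \<Psi> = 1 \<and> Re (qform A \<Psi>) = E \<and> (\<forall>\<Phi>. norm \<Phi> = 1 \<longrightarrow> E \<le> Re (qform A \<Phi>))"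
proof -
  have ne: "sphere (0::complex^'n) 1 \<noteq> {}"
  proof -
    have "axis undefined 1 \<in> sphere (0::complex^'n) 1" by (simp add: norm_axis_1)
    then show ?thesis by blast
  qed
  obtain \<Psi> where P: "\<Psi> \<in> sphere 0 1" and mn: "\<forall>y\<in>sphere 0 1. Re (qform A \<Psi>) \<le> Re (qform A y)"
    using continuous_attains_inf[OF compact_sphere ne cont_qform] by blast
  have eq: "E = Re (qform A \<Psi>)"
    unfolding E_def by (rule cInf_eq_minimum) (use P mn in auto)
  show ?thesis using P mn eq by auto
qed

lemma gs_props:
  "\<exists>\<Psi>. norm \<Psi> = 1 \<and> Re (qform (\<iota> u + W) \<Psi>) = gs_energy \<iota> W u
     \<and> (\<forall>\<Phi>. norm \<Phi> = 1 \<longrightarrow> gs_energy \<iota> W u \<le> Re (qform (\<iota> u + W) \<Phi>))"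
  unfolding gs_energy_def by (rule gs_min)

lemma sum_cnj_norm: "(\<Sum>i\<in>UNIV. cnj (x$i) * x$i) = of_real ((norm (x::complex^'n))^2)"
proof -
  have "(\<Sum>i\<in>UNIV. cnj (x$i) * x$i) = (\<Sum>i\<in>UNIV. of_real ((norm (x$i))^2))"
    by (rule sum.cong[OF refl], subst complex_norm_square, rule mult.commute)
  also have "\<dots> = of_real ((norm x)^2)" by (simp add: norm_sq_vec)
  finally show ?thesis .
qed

lemma trace_diff: fixes G :: "complex^'n^'n" shows "trace (G ** (A - B)) = trace (G ** A) - trace (G ** B)"
  unfolding trace_mm by (simp add: right_diff_distrib sum_subtractf)

lemma trace_mat: fixes G :: "complex^'n^'n" shows "trace (G ** mat c) = c * trace G"
proof -
  have "(\<Sum>k\<in>UNIV. G$i$k * (mat c :: complex^'n^'n)$k$i) = G$i$i * c" for i :: 'n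
  proof -
    have "(\<Sum>k\<in>UNIV. G$i$k * (mat c :: complex^'n^'n)$k$i) = (\<Sum>k\<in>UNIV. if k = i then G$i$i * c else 0)"
      by (rule sum.cong) (auto simp: mat_def)
    then show ?thesis by simp
  qed
  then show ?thesis unfolding trace_mm by (simp add: trace_def sum_distrib_left mult.commute)
qed

lemma density_lower:
  fixes A :: "complex^'n^'n"
  assumes G: "G \<in> density_ops"
    and lb: "\<forall>\<Phi>. norm \<Phi> = 1 \<longrightarrow> E \<le> Re (qform A \<Phi>)"
  shows "E \<le> Re (trace (G ** A))"
proof -
  define M where "M = A - mat (of_real E)"
  have Mp: "\<forall>x. 0 \<le> Re (qform M x)"
  proof
    fix x :: "complex^'n"
    show "0 \<le> Re (qform M x)"
    proof (cases "x = 0")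
      case True then show ?thesis unfolding qform_def by simp
    next
      case False
      define \<Psi> where "\<Psi> = (1 / norm x) *\<^sub>R x"
      have n1: "norm \<Psi> = 1" unfolding \<Psi>_def using False by simp
      have xe: "x = norm x *\<^sub>R \<Psi>" unfolding \<Psi>_def using False by simp
      have "qform M x = qform A x - of_real E * of_real ((norm x)^2)"
        unfolding M_def qform_diff qform_mat sum_cnj_norm ..
      also have "qform A x = of_real ((norm x)^2) * qform A \<Psi>"
        by (subst xe, rule qform_scale)
      finally have "qform M x = of_real ((norm x)^2) * (qform A \<Psi> - of_real E)"
        by (simp add: algebra_simps)
      then have "Re (qform M x) = (norm x)^2 * (Re (qform A \<Psi>) - E)"
        by simp
      moreover have "Re (qform A \<Psi>) - E \<ge> 0" using lb n1 by auto
      ultimately show ?thesis by simp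
    qed
  qed
  have "0 \<le> Re (trace (G ** M))"
    using psd_trace_aux[OF Mp, of UNIV] G unfolding density_ops_def by auto
  also have "trace (G ** M) = trace (G ** A) - of_real E * trace G"
    unfolding M_def trace_diff trace_mat ..
  finally show ?thesis using G unfolding density_ops_def by simp
qed

lemma proj_density: "norm \<Psi> = 1 \<Longrightarrow> proj \<Psi> \<in> density_ops"
proof -
  assume n: "norm \<Psi> = 1"
  have h: "hermitian (proj \<Psi>)" unfolding hermitian_def adj_def proj_def by (simp add: vec_eq_iff mult.commute)
  have p: "0 \<le> Re (qform (proj \<Psi>) x)" for x
  proof -
    define s where "s = (\<Sum>i\<in>UNIV. cnj (x$i) * \<Psi>$i)"
    have "qform (proj \<Psi>) x = s * cnj s"
      unfolding qform_def proj_def s_def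
      by (simp add: sum_distrib_left sum_distrib_right algebra_simps) (rule sum.swap)
    also have "\<dots> = of_real ((norm s)^2)" by (rule complex_norm_square[symmetric])
    finally show ?thesis by simp
  qed
  have t: "trace (proj \<Psi>) = 1"
  proof -
    have "trace (proj \<Psi>) = (\<Sum>i\<in>UNIV. cnj (\<Psi>$i) * \<Psi>$i)"
      unfolding trace_def proj_def by (simp add: mult.commute)
    also have "\<dots> = 1" unfolding sum_cnj_norm n by simp
    finally show ?thesis .
  qed
  show ?thesis unfolding density_ops_def using h p t by blast
qed

lemma dual_split: "dualmap \<iota> G u + Re (trace (G ** W)) = Re (trace (G ** (\<iota> u + W)))"
  unfolding dualmap_def by (simp add: trace_split)



lemma inf_bounds: "(s::real) \<in> X \<Longrightarrow> \<forall>y\<in>X. b \<le> y \<Longrightarrow> b \<le> Inf X \<and> Inf X \<le> s"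
proof -
  assume s: "s \<in> X" and b: "\<forall>y\<in>X. b \<le> y"
  have "X \<noteq> {}" using s by blast
  then have "b \<le> Inf X" using b by (intro cInf_greatest) auto
  moreover have "Inf X \<le> s" using s b by (intro cInf_lower bdd_belowI) auto
  ultimately show ?thesis by blast
qed

lemma proj_re: "Re (trace (proj \<Psi> ** (\<iota> u + W))) = Re (qform (\<iota> u + W) \<Psi>)"
  by (simp add: trace_proj)

theorem theorem2p29:
  fixes \<iota> :: "'v::real_vector \<Rightarrow> complex^'n^'n" and W :: "complex^'n^'n" and v :: 'v
  assumes "gft \<iota> W"
  shows "is_min_over (\<lambda>\<rho>. \<rho> v + F_HK \<iota> W \<rho>) (vrep \<iota> W) (gs_energy \<iota> W v)
       \<and> is_min_over (\<lambda>\<rho>. \<rho> v + F_p \<iota> W \<rho>) (dualmap \<iota> ` pure_states) (gs_energy \<iota> W v)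
       \<and> is_min_over (\<lambda>\<rho>. \<rho> v + F_e \<iota> W \<rho>) (dualmap \<iota> ` density_ops) (gs_energy \<iota> W v)"
proof -
  define E where "E = gs_energy \<iota> W v"
  obtain \<Psi>0 where n0: "norm \<Psi>0 = 1" and e0: "Re (qform (\<iota> v + W) \<Psi>0) = E"
    and lb: "\<forall>\<Phi>. norm \<Phi> = 1 \<longrightarrow> E \<le> Re (qform (\<iota> v + W) \<Phi>)"
    using gs_props[of \<iota> v W] unfolding E_def by blast
  define \<rho>0 where "\<rho>0 = dualmap \<iota> (proj \<Psi>0)"
  have key0: "\<rho>0 v + Re (trace (proj \<Psi>0 ** W)) = E"
    unfolding \<rho>0_def dual_split proj_re e0 ..
  have lbG: "E \<le> dualmap \<iota> G v + Re (trace (G ** W))" if "G \<in> density_ops" for G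
    unfolding dual_split using density_lower[OF that lb] .
  have lbP: "E \<le> dualmap \<iota> (proj \<Psi>) v + Re (trace (proj \<Psi> ** W))" if "norm \<Psi> = 1" for \<Psi>
    using lbG[OF proj_density[OF that]] .
  have d0: "proj \<Psi>0 \<in> density_ops" using proj_density[OF n0] .
  have p0: "proj \<Psi>0 \<in> pure_states" unfolding pure_states_def using n0 by blast
  have Fe: "E - \<rho> v \<le> F_e \<iota> W \<rho>" if r: "\<rho> \<in> dualmap \<iota> ` density_ops" for \<rho>
  proof -
    obtain G where G: "G \<in> density_ops" "\<rho> = dualmap \<iota> G" using r by blast
    have "E - \<rho> v \<le> Inf {Re (trace (\<Gamma> ** W)) | \<Gamma>. \<Gamma> \<in> density_ops \<and> dualmap \<iota> \<Gamma> = \<rho>}"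
      by (rule conjunct1[OF inf_bounds[of "Re (trace (G ** W))"]]) (use G lbG in force)+
    then show ?thesis unfolding F_e_def .
  qed
  have Fe0: "F_e \<iota> W \<rho>0 \<le> Re (trace (proj \<Psi>0 ** W))"
  proof -
    have "Inf {Re (trace (\<Gamma> ** W)) | \<Gamma>. \<Gamma> \<in> density_ops \<and> dualmap \<iota> \<Gamma> = \<rho>0} \<le> Re (trace (proj \<Psi>0 ** W))"
      by (rule conjunct2[OF inf_bounds[of _ _ "E - \<rho>0 v"]]) (use d0 \<rho>0_def lbG in force)+
    then show ?thesis unfolding F_e_def .
  qed
  have part3: "is_min_over (\<lambda>\<rho>. \<rho> v + F_e \<iota> W \<rho>) (dualmap \<iota> ` density_ops) E"
    unfolding is_min_over_def
  proof
    show "\<exists>x\<in>dualmap \<iota> ` density_ops. x v + F_e \<iota> W x = E"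
    proof (intro bexI)
      show "\<rho>0 \<in> dualmap \<iota> ` density_ops" unfolding \<rho>0_def using d0 by blast
      show "\<rho>0 v + F_e \<iota> W \<rho>0 = E"
        using Fe[of \<rho>0] Fe0 key0 \<open>\<rho>0 \<in> dualmap \<iota> ` density_ops\<close> by linarith
    qed
    show "\<forall>x\<in>dualmap \<iota> ` density_ops. E \<le> x v + F_e \<iota> W x" using Fe by force
  qed
  have Fp: "E - \<rho> v \<le> F_p \<iota> W \<rho>" if r: "\<rho> \<in> dualmap \<iota> ` pure_states" for \<rho>
  proof -
    obtain G where G: "G \<in> pure_states" "\<rho> = dualmap \<iota> G" using r by blast
    have "E - \<rho> v \<le> Inf {Re (trace (\<Gamma> ** W)) | \<Gamma>. \<Gamma> \<in> pure_states \<and> dualmap \<iota> \<Gamma> = \<rho>}"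
      by (rule conjunct1[OF inf_bounds[of "Re (trace (G ** W))"]])
        (use G lbP in \<open>force simp: pure_states_def\<close>)+
    then show ?thesis unfolding F_p_def .
  qed
  have Fp0: "F_p \<iota> W \<rho>0 \<le> Re (trace (proj \<Psi>0 ** W))"
  proof -
    have "Inf {Re (trace (\<Gamma> ** W)) | \<Gamma>. \<Gamma> \<in> pure_states \<and> dualmap \<iota> \<Gamma> = \<rho>0} \<le> Re (trace (proj \<Psi>0 ** W))"
      by (rule conjunct2[OF inf_bounds[of _ _ "E - \<rho>0 v"]])
        (use p0 \<rho>0_def lbP in \<open>force simp: pure_states_def\<close>)+
    then show ?thesis unfolding F_p_def .
  qed
  have part2: "is_min_over (\<lambda>\<rho>. \<rho> v + F_p \<iota> W \<rho>) (dualmap \<iota> ` pure_states) E"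
    unfolding is_min_over_def
  proof
    show "\<exists>x\<in>dualmap \<iota> ` pure_states. x v + F_p \<iota> W x = E"
    proof (intro bexI)
      show "\<rho>0 \<in> dualmap \<iota> ` pure_states" unfolding \<rho>0_def using p0 by blast
      show "\<rho>0 v + F_p \<iota> W \<rho>0 = E"
        using Fp[of \<rho>0] Fp0 key0 \<open>\<rho>0 \<in> dualmap \<iota> ` pure_states\<close> by linarith
    qed
    show "\<forall>x\<in>dualmap \<iota> ` pure_states. E \<le> x v + F_p \<iota> W x" using Fp by force
  qed
  have HK: "\<exists>\<Psi> u. norm \<Psi> = 1 \<and> Re (qform (\<iota> u + W) \<Psi>) = gs_energy \<iota> W u
       \<and> dualmap \<iota> (proj \<Psi>) = \<rho> \<and> F_HK \<iota> W \<rho> = Re (trace (proj \<Psi> ** W))"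
    if r: "\<rho> \<in> vrep \<iota> W" for \<rho>
  proof -
    have ex: "\<exists>\<Gamma>. \<exists>u. \<Gamma> \<in> pure_ground_states \<iota> W u \<and> dualmap \<iota> \<Gamma> = \<rho>"
      using r unfolding vrep_def by blast
    define \<Gamma> where "\<Gamma> = (SOME \<Gamma>. \<exists>u. \<Gamma> \<in> pure_ground_states \<iota> W u \<and> dualmap \<iota> \<Gamma> = \<rho>)"
    have "\<exists>u. \<Gamma> \<in> pure_ground_states \<iota> W u \<and> dualmap \<iota> \<Gamma> = \<rho>"
      unfolding \<Gamma>_def by (rule someI_ex[OF ex])
    then obtain u \<Psi> where "\<Gamma> = proj \<Psi>" "norm \<Psi> = 1" "Re (qform (\<iota> u + W) \<Psi>) = gs_energy \<iota> W u"
      "dualmap \<iota> \<Gamma> = \<rho>"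
      unfolding pure_ground_states_def by blast
    moreover have "F_HK \<iota> W \<rho> = Re (trace (\<Gamma> ** W))" unfolding F_HK_def \<Gamma>_def ..
    ultimately show ?thesis by blast
  qed
  have part1: "is_min_over (\<lambda>\<rho>. \<rho> v + F_HK \<iota> W \<rho>) (vrep \<iota> W) E"
    unfolding is_min_over_def
  proof
    have inV: "\<rho>0 \<in> vrep \<iota> W"
    proof -
      have "proj \<Psi>0 \<in> pure_ground_states \<iota> W v"
        unfolding pure_ground_states_def using n0 e0 E_def by blast
      then show ?thesis unfolding vrep_def \<rho>0_def by blast
    qed
    show "\<exists>x\<in>vrep \<iota> W. x v + F_HK \<iota> W x = E"
    proof (intro bexI[OF _ inV])
      obtain \<Psi> u where P: "norm \<Psi> = 1" "Re (qform (\<iota> u + W) \<Psi>) = gs_energy \<iota> W u"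
        "dualmap \<iota> (proj \<Psi>) = \<rho>0" "F_HK \<iota> W \<rho>0 = Re (trace (proj \<Psi> ** W))"
        using HK[OF inV] by blast
      obtain \<Phi> where lbu: "\<forall>\<Phi>. norm \<Phi> = 1 \<longrightarrow> gs_energy \<iota> W u \<le> Re (qform (\<iota> u + W) \<Phi>)"
        using gs_props[of \<iota> u W] by blast
      have a1: "\<rho>0 u + Re (trace (proj \<Psi> ** W)) = gs_energy \<iota> W u"
        using dual_split[of \<iota> "proj \<Psi>" u W] P(2,3) unfolding proj_re by simp
      have a2: "\<rho>0 u + Re (trace (proj \<Psi>0 ** W)) = Re (qform (\<iota> u + W) \<Psi>0)"
        unfolding \<rho>0_def dual_split proj_re ..
      have "Re (trace (proj \<Psi> ** W)) \<le> Re (trace (proj \<Psi>0 ** W))"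
        using a1 a2 lbu n0 by force
      moreover have "E \<le> \<rho>0 v + Re (trace (proj \<Psi> ** W))" using lbP[OF P(1)] P(3) by simp
      ultimately show "\<rho>0 v + F_HK \<iota> W \<rho>0 = E" using P(4) key0 by linarith
    qed
    show "\<forall>x\<in>vrep \<iota> W. E \<le> x v + F_HK \<iota> W x"
    proof
      fix \<rho> assume "\<rho> \<in> vrep \<iota> W"
      then obtain \<Psi> u where P: "norm \<Psi> = 1" "dualmap \<iota> (proj \<Psi>) = \<rho>"
        "F_HK \<iota> W \<rho> = Re (trace (proj \<Psi> ** W))"
        using HK by blast
      show "E \<le> \<rho> v + F_HK \<iota> W \<rho>" using lbP[OF P(1)] P(2,3) by simp
    qed
  qed
  show ?thesis using part1 part2 part3 unfolding E_def by blast
qed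


end
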